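(* Let $L$ be a co-Heyting algebra and let $(a_n)_{n<\omega},(b_n)_{n<\omega},(c_n)_{n<\omega}$ be sequences in $L$ with $c_n\le b_n\le a_n$ for every $n$. If $(a_n)$ and $(c_n)$ both converge to the same $l\in L$ for the codimetric pseudometric, then $(b_n)$ converges to $l$.
   Context: A co-Heyting algebra is a bounded distributive lattice $(L,0,1,\vee,\wedge)$ such that $a-b=\min\{c\in L: a\le b\vee c\}$ exists for all $a,b$. Let $a\triangle b=(a-b)\vee(b-a)$. $\operatorname{Spec}L$ is the set of prime filters ordered by inclusion; height = foundation rank there; $\operatorname{codim}_La=\min\{\operatorname{height}\mathfrak p: a\in\mathfrak p\}$ ($+\infty$ if none). The codimetric pseudometric is $\operatorname{dist}_L(a,b)=2^{-\operatorname{codim}_L(a\triangle b)}$ if finite and $0$ otherwise; $(x_n)$ converges to $y$ iff $\operatorname{dist}_L(x_n,y)\to0$. *)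

theory Defs
  imports Complex_Main "HOL-Library.Extended_Nat"
begin

definition coheyting :: "'a::{bounded_lattice, distrib_lattice} itself \<Rightarrow> bool" where
  "coheyting _ \<longleftrightarrow> (\<forall>a b::'a. \<exists>c. a \<le> sup b c \<and> (\<forall>d. a \<le> sup b d \<longrightarrow> c \<le> d))"

definition codiff :: "'a::{bounded_lattice, distrib_lattice} \<Rightarrow> 'a \<Rightarrow> 'a" where
  "codiff a b = (THE c. a \<le> sup b c \<and> (\<forall>d. a \<le> sup b d \<longrightarrow> c \<le> d))"

definition symdiff :: "'a::{bounded_lattice, distrib_lattice} \<Rightarrow> 'a \<Rightarrow> 'a" where
  "symdiff a b = sup (codiff a b) (codiff b a)"

definition prime_filter :: "'a::{bounded_lattice, distrib_lattice} set \<Rightarrow> bool" where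
  "prime_filter F \<longleftrightarrow> top \<in> F \<and> bot \<notin> F
     \<and> (\<forall>x y. x \<in> F \<longrightarrow> x \<le> y \<longrightarrow> y \<in> F)
     \<and> (\<forall>x y. x \<in> F \<longrightarrow> y \<in> F \<longrightarrow> inf x y \<in> F)
     \<and> (\<forall>x y. sup x y \<in> F \<longrightarrow> x \<in> F \<or> y \<in> F)"

text \<open>Foundation rank in Spec L (ordered by inclusion), finite values:
  rank_le n p  iff  the foundation rank of p is at most n.\<close>
fun rank_le :: "nat \<Rightarrow> 'a::{bounded_lattice, distrib_lattice} set \<Rightarrow> bool" where
  "rank_le 0 p = (\<forall>q. prime_filter q \<longrightarrow> \<not> q \<subset> p)"
| "rank_le (Suc n) p = (\<forall>q. prime_filter q \<longrightarrow> q \<subset> p \<longrightarrow> rank_le n q)"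

text \<open>Height; \<infinity> encodes "not a finite ordinal" (infinite rank or ill-founded).\<close>
definition height :: "'a::{bounded_lattice, distrib_lattice} set \<Rightarrow> enat" where
  "height p = (INF n \<in> {n. rank_le n p}. enat n)"

definition codim :: "'a::{bounded_lattice, distrib_lattice} \<Rightarrow> enat" where
  "codim a = (INF p \<in> {p. prime_filter p \<and> a \<in> p}. height p)"

definition codist :: "'a::{bounded_lattice, distrib_lattice} \<Rightarrow> 'a \<Rightarrow> real" where
  "codist a b = (case codim (symdiff a b) of enat n \<Rightarrow> (1/2) ^ n | \<infinity> \<Rightarrow> 0)"

definition coconverges :: "(nat \<Rightarrow> 'a::{bounded_lattice, distrib_lattice}) \<Rightarrow> 'a \<Rightarrow> bool" where
  "coconverges x y \<longleftrightarrow> ((\<lambda>n. codist (x n) y) \<longlonglongrightarrow> 0)"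

end

theory Submission
  imports Defs
begin

lemma codiff_spec:
  fixes a b :: "'a::{bounded_lattice, distrib_lattice}"
  assumes "coheyting TYPE('a)"
  shows "a \<le> sup b (codiff a b) \<and> (\<forall>d. a \<le> sup b d \<longrightarrow> codiff a b \<le> d)"
proof -
  from assms obtain c where c: "a \<le> sup b c" "\<forall>d. a \<le> sup b d \<longrightarrow> c \<le> d"
    unfolding coheyting_def by blast
  show ?thesis unfolding codiff_def
    by (rule theI2[where a=c]) (use c in \<open>auto intro: antisym\<close>)
qed

lemma codiff_le1:
  fixes a b l :: "'a::{bounded_lattice, distrib_lattice}"
  assumes "coheyting TYPE('a)" "b \<le> a"
  shows "codiff b l \<le> codiff a l"
proof -
  have "b \<le> sup l (codiff a l)" using codiff_spec[OF assms(1), of a l] assms(2) by auto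
  thus ?thesis using codiff_spec[OF assms(1), of b l] by auto
qed

lemma codiff_le2:
  fixes c b l :: "'a::{bounded_lattice, distrib_lattice}"
  assumes "coheyting TYPE('a)" "c \<le> b"
  shows "codiff l b \<le> codiff l c"
proof -
  have "l \<le> sup c (codiff l c)" using codiff_spec[OF assms(1), of l c] by auto
  also have "\<dots> \<le> sup b (codiff l c)" using assms(2) by (meson order_refl sup.mono)
  finally show ?thesis using codiff_spec[OF assms(1), of l b] by auto
qed

lemma codim_mono:
  fixes x y :: "'a::{bounded_lattice, distrib_lattice}"
  assumes "x \<le> y" shows "codim y \<le> codim x"
  unfolding codim_def
  by (rule INF_superset_mono) (auto simp: prime_filter_def intro: assms)

lemma codim_sup:
  fixes x y :: "'a::{bounded_lattice, distrib_lattice}"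
  shows "min (codim x) (codim y) \<le> codim (sup x y)"
  unfolding codim_def
proof (rule INF_greatest)
  fix p assume p: "p \<in> {p. prime_filter p \<and> sup x y \<in> p}"
  then have "x \<in> p \<or> y \<in> p" by (auto simp: prime_filter_def)
  then show "min (INF p \<in> {p. prime_filter p \<and> x \<in> p}. height p)
                 (INF p \<in> {p. prime_filter p \<and> y \<in> p}. height p) \<le> height p"
  proof
    assume "x \<in> p"
    then have "(INF p \<in> {p. prime_filter p \<and> x \<in> p}. height p) \<le> height p"
      using p by (intro INF_lower) auto
    then show ?thesis by (simp add: min.coboundedI1)
  next
    assume "y \<in> p"
    then have "(INF p \<in> {p. prime_filter p \<and> y \<in> p}. height p) \<le> height p"
      using p by (intro INF_lower) auto
    then show ?thesis by (simp add: min.coboundedI2)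
  qed
qed

definition ff :: "enat \<Rightarrow> real" where
  "ff e = (case e of enat n \<Rightarrow> (1/2) ^ n | \<infinity> \<Rightarrow> 0)"

lemma ff_anti: "e1 \<le> e2 \<Longrightarrow> ff e2 \<le> ff e1"
  by (cases e1; cases e2) (auto simp: ff_def power_decreasing)

lemma ff_nonneg: "0 \<le> ff e"
  by (cases e) (auto simp: ff_def)

theorem theorem7p6:
  fixes a b c :: "nat \<Rightarrow> 'a::{bounded_lattice, distrib_lattice}" and l :: 'a
  assumes "coheyting TYPE('a)"
    and "\<And>n. c n \<le> b n" and "\<And>n. b n \<le> a n"
    and "coconverges a l" and "coconverges c l"
  shows "coconverges b l"
proof -
  have cd: "\<And>x y. codist x y = ff (codim (symdiff x y))"
    by (simp add: codist_def ff_def)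
  have bound: "codist (b n) l \<le> codist (a n) l + codist (c n) l" for n
  proof -
    have "symdiff (b n) l \<le> sup (symdiff (a n) l) (symdiff (c n) l)"
      unfolding symdiff_def
      using codiff_le1[OF assms(1) assms(3)[of n], of l]
            codiff_le2[OF assms(1) assms(2)[of n], of l]
      by (meson le_supI le_supI1 le_supI2 sup_ge1 sup_ge2 order_trans)
    then have "min (codim (symdiff (a n) l)) (codim (symdiff (c n) l)) \<le> codim (symdiff (b n) l)"
      using codim_mono codim_sup order_trans by blast
    then have h: "ff (codim (symdiff (b n) l)) \<le> ff (min (codim (symdiff (a n) l)) (codim (symdiff (c n) l)))"
      by (rule ff_anti)
    have "ff (min (codim (symdiff (a n) l)) (codim (symdiff (c n) l)))
          \<le> ff (codim (symdiff (a n) l)) + ff (codim (symdiff (c n) l))"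
      by (cases "codim (symdiff (a n) l) \<le> codim (symdiff (c n) l)")
         (auto simp: min_def ff_nonneg)
    with h show ?thesis by (simp add: cd)
  qed
  have nn: "0 \<le> codist (b n) l" for n by (simp add: cd ff_nonneg)
  have "(\<lambda>n. codist (a n) l + codist (c n) l) \<longlonglongrightarrow> 0"
    using tendsto_add[OF assms(4)[unfolded coconverges_def] assms(5)[unfolded coconverges_def]] by simp
  then show ?thesis unfolding coconverges_def
    by (rule real_tendsto_sandwich[rotated 2, OF tendsto_const]) (use nn bound in auto)
qed

end
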